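(* Fix constants $\lambda>0$ and $\epsilon>0$. For each $n$, let $k=\frac{\lambda n}{\log n}$ be the number of defectives, and let the defective set $\mathcal{K}\subseteq\{1,\dots,n\}$ be drawn uniformly at random among all subsets of size $k$ (combinatorial prior). Let $$T=(1+\epsilon)\frac{\lambda}{\log^2 2}\,n$$ and form a near-constant tests-per-item design with $T$ tests: each of the $n$ items, independently, draws $L=\frac{T\log 2}{k}$ tests uniformly at random with replacement from the $T$ tests and is included in each drawn test. Then the probability that the COMP decoder outputs exactly $\mathcal{K}$ is $1-o(1)$ as $n\to\infty$.
   Context: $\log$ denotes the natural logarithm. Nonadaptive group testing: a test is a subset of items, and its outcome is positive iff it contains at least one defective item (the logical OR of the defectivity indicators of its items). All tests are fixed before any outcomes are seen. The COMP decoder declares every item that appears in at least one negative test to be nondefective, and declares all remaining items defective. *)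

theory Defs
  imports "HOL-Probability.Probability"
begin

text \<open>Items are 1..n, tests are 0..<T. A design is a map D from items to the
list of the L tests drawn (with replacement) by that item; item i is in test t
iff t is in set (D i).\<close>

definition test_positive :: "(nat \<Rightarrow> nat list) \<Rightarrow> nat set \<Rightarrow> nat \<Rightarrow> bool" where
  "test_positive D K t \<longleftrightarrow> (\<exists>i\<in>K. t \<in> set (D i))"

definition comp_decode :: "nat \<Rightarrow> nat \<Rightarrow> (nat \<Rightarrow> nat list) \<Rightarrow> nat set \<Rightarrow> nat set" where
  "comp_decode n T D K =
     {i \<in> {1..n}. \<not> (\<exists>t<T. t \<in> set (D i) \<and> \<not> test_positive D K t)}"

definition defective_prior :: "nat \<Rightarrow> nat \<Rightarrow> nat set pmf" where
  "defective_prior n k = pmf_of_set {K. K \<subseteq> {1..n} \<and> card K = k}"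

text \<open>Near-constant tests-per-item design: each item independently draws L
tests uniformly with replacement from the T tests (uniform over all
assignments of length-L sequences of tests to items).\<close>
definition nc_design :: "nat \<Rightarrow> nat \<Rightarrow> nat \<Rightarrow> (nat \<Rightarrow> nat list) pmf" where
  "nc_design n T L =
     pmf_of_set (PiE {1..n} (\<lambda>_. {xs. set xs \<subseteq> {..<T} \<and> length xs = L}))"

definition comp_success_prob :: "nat \<Rightarrow> nat \<Rightarrow> nat \<Rightarrow> nat \<Rightarrow> real" where
  "comp_success_prob n k T L =
     measure_pmf.prob (pair_pmf (defective_prior n k) (nc_design n T L))
       {(K, D). comp_decode n T D K = K}"

definition num_def :: "real \<Rightarrow> nat \<Rightarrow> nat" where
  "num_def lam n = nat \<lfloor>lam * real n / ln (real n)\<rfloor>"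

definition num_tests :: "real \<Rightarrow> real \<Rightarrow> nat \<Rightarrow> nat" where
  "num_tests lam eps n = nat \<lfloor>(1 + eps) * lam / (ln 2)\<^sup>2 * real n\<rfloor>"

definition tests_per_item :: "real \<Rightarrow> real \<Rightarrow> nat \<Rightarrow> nat" where
  "tests_per_item lam eps n =
     nat \<lceil>real (num_tests lam eps n) * ln 2 / real (num_def lam n)\<rceil>"

end

theory Submission
  imports Defs "HOL-Real_Asymp.Real_Asymp"
begin

definition Seqs :: "nat \<Rightarrow> nat set \<Rightarrow> nat list set" where
  "Seqs L A = {xs. set xs \<subseteq> A \<and> length xs = L}"
definition Om :: "nat \<Rightarrow> nat \<Rightarrow> nat \<Rightarrow> (nat \<Rightarrow> nat list) set" where
  "Om n T L = PiE {1..n} (\<lambda>_. Seqs L {..<T})"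
definition UU :: "nat set \<Rightarrow> (nat \<Rightarrow> nat list) \<Rightarrow> nat set" where
  "UU K D = (\<Union>j\<in>K. set (D j))"

lemma card_Seqs: "finite A \<Longrightarrow> card (Seqs L A) = card A ^ L"
  unfolding Seqs_def by (rule card_lists_length_eq)

lemma finite_Seqs: "finite A \<Longrightarrow> finite (Seqs L A)"
  unfolding Seqs_def by (rule finite_lists_length_eq)

lemma finite_Om: "finite (Om n T L)"
  unfolding Om_def by (auto intro!: finite_PiE finite_Seqs)

lemma card_Om: "card (Om n T L) = T ^ (L * n)"
  unfolding Om_def by (simp add: card_PiE card_Seqs power_mult)

lemma UU_sub: "K \<subseteq> {1..n} \<Longrightarrow> D \<in> Om n T L \<Longrightarrow> UU K D \<subseteq> {..<T}"
  unfolding UU_def Om_def Seqs_def by (auto simp: PiE_iff)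

lemma avoid_count:
  assumes "K \<subseteq> {1..n}" "A \<subseteq> {..<T}"
  shows "card {D \<in> Om n T L. UU K D \<inter> A = {}} = (T - card A)^(L * card K) * T^(L*(n - card K))"
proof -
  have fA: "finite A" using assms(2) finite_subset by blast
  have "{D \<in> Om n T L. UU K D \<inter> A = {}} = PiE {1..n} (\<lambda>j. if j \<in> K then Seqs L ({..<T} - A) else Seqs L {..<T})"
  proof (intro equalityI subsetI)
    fix D assume D: "D \<in> {D \<in> Om n T L. UU K D \<inter> A = {}}"
    show "D \<in> PiE {1..n} (\<lambda>j. if j \<in> K then Seqs L ({..<T} - A) else Seqs L {..<T})"
    proof (rule PiE_I)
      fix j assume j: "j \<in> {1..n}"
      have "D j \<in> Seqs L {..<T}" using D j unfolding Om_def by auto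
      moreover have "j \<in> K \<Longrightarrow> set (D j) \<inter> A = {}" using D unfolding UU_def by auto
      ultimately show "D j \<in> (if j \<in> K then Seqs L ({..<T} - A) else Seqs L {..<T})"
        unfolding Seqs_def by auto
    next
      fix j assume "j \<notin> {1..n}" thus "D j = undefined" using D unfolding Om_def by auto
    qed
  next
    fix D assume D: "D \<in> PiE {1..n} (\<lambda>j. if j \<in> K then Seqs L ({..<T} - A) else Seqs L {..<T})"
    have "D \<in> Om n T L" unfolding Om_def
    proof (rule PiE_I)
      fix j assume j: "j \<in> {1..n}"
      thus "D j \<in> Seqs L {..<T}" using D PiE_mem[OF D j] unfolding Seqs_def by (auto split: if_splits)
    next
      fix j assume "j \<notin> {1..n}" thus "D j = undefined" using D by auto
    qed
    moreover have "UU K D \<inter> A = {}"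
    proof -
      have "set (D j) \<inter> A = {}" if "j \<in> K" for j
      proof -
        have jn: "j \<in> {1..n}" using that assms(1) by auto
        have "D j \<in> Seqs L ({..<T} - A)" using PiE_mem[OF D jn] that by simp
        thus ?thesis unfolding Seqs_def by auto
      qed
      thus ?thesis unfolding UU_def by auto
    qed
    ultimately show "D \<in> {D \<in> Om n T L. UU K D \<inter> A = {}}" by simp
  qed
  hence "card {D \<in> Om n T L. UU K D \<inter> A = {}} = (\<Prod>j\<in>{1..n}. card (if j \<in> K then Seqs L ({..<T} - A) else Seqs L {..<T}))"
    by (simp add: card_PiE)
  also have "\<dots> = (\<Prod>j\<in>{1..n}. if j \<in> K then (T - card A)^L else T^L)"
    using assms(2) fA by (intro prod.cong refl) (auto simp: card_Seqs card_Diff_subset)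
  also have "\<dots> = ((T - card A)^L)^card K * (T^L)^(card ({1..n} - K))"
  proof -
    have "{1..n} \<inter> K = K" "{1..n} \<inter> - K = {1..n} - K" using assms(1) by auto
    thus ?thesis by (simp add: prod.If_cases)
  qed
  also have "card ({1..n} - K) = n - card K"
    using assms(1) by (simp add: card_Diff_subset finite_subset)
  finally show ?thesis by (simp add: power_mult)
qed

lemma card_filter_sum: "finite A \<Longrightarrow> card {x\<in>A. P x} = (\<Sum>x\<in>A. if P x then 1 else (0::nat))"
  by (simp add: sum.If_cases Int_def conj_commute)

lemma Z_as_sum:
  "card ({..<(T::nat)} - U) = (\<Sum>t<T. if U \<inter> {t} = {} then 1 else (0::nat))"
proof -
  have "card ({..<T} - U) = card {t\<in>{..<T}. U \<inter> {t} = {}}" by (rule arg_cong[where f=card]) auto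
  also have "\<dots> = (\<Sum>t<T. if U \<inter> {t} = {} then 1 else (0::nat))" by (rule card_filter_sum[of "{..<T}" "\<lambda>t. U \<inter> {t} = {}", OF finite_lessThan])
  finally show ?thesis .
qed

lemma Z2_as_sum:
  "card ({..<(T::nat)} - U) ^ 2 = (\<Sum>s<T. \<Sum>t<T. if U \<inter> {s,t} = {} then 1 else (0::nat))"
proof -
  have "card ({..<T} - U) ^ 2 = (\<Sum>s<T. if U \<inter> {s} = {} then 1 else (0::nat)) * (\<Sum>t<T. if U \<inter> {t} = {} then 1 else (0::nat))"
    by (simp add: Z_as_sum power2_eq_square)
  also have "\<dots> = (\<Sum>s<T. \<Sum>t<T. (if U \<inter> {s} = {} then 1 else (0::nat)) * (if U \<inter> {t} = {} then 1 else 0))"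
    by (simp add: sum_product)
  also have "\<dots> = (\<Sum>s<T. \<Sum>t<T. if U \<inter> {s,t} = {} then 1 else (0::nat))"
    by (intro sum.cong refl) auto
  finally show ?thesis .
qed

lemma Zsum:
  assumes "K \<subseteq> {1..n}"
  shows "(\<Sum>D\<in>Om n T L. card ({..<T} - UU K D)) = T * ((T-1)^(L*card K) * T^(L*(n-card K)))"
proof -
  have "(\<Sum>D\<in>Om n T L. card ({..<T} - UU K D)) = (\<Sum>D\<in>Om n T L. \<Sum>t<T. if UU K D \<inter> {t} = {} then 1 else (0::nat))"
    by (simp add: Z_as_sum)
  also have "\<dots> = (\<Sum>t<T. \<Sum>D\<in>Om n T L. if UU K D \<inter> {t} = {} then 1 else (0::nat))"
    by (rule sum.swap)
  also have "\<dots> = (\<Sum>t<T. card {D\<in>Om n T L. UU K D \<inter> {t} = {}})"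
    by (simp add: card_filter_sum finite_Om)
  also have "\<dots> = (\<Sum>t<T. (T-1)^(L*card K) * T^(L*(n-card K)))"
  proof (intro sum.cong refl)
    fix t assume "t \<in> {..<T}"
    thus "card {D\<in>Om n T L. UU K D \<inter> {t} = {}} = (T-1)^(L*card K) * T^(L*(n-card K))"
      using avoid_count[OF assms, of "{t}" T L] by simp
  qed
  finally show ?thesis by simp
qed

lemma Z2sum:
  assumes "K \<subseteq> {1..n}"
  shows "(\<Sum>D\<in>Om n T L. card ({..<T} - UU K D) ^ 2) =
     T * ((T-1)^(L*card K) * T^(L*(n-card K)) + (T - 1) * ((T-2)^(L*card K) * T^(L*(n-card K))))"
proof -
  define g where "g = (\<lambda>c::nat. (T-c)^(L*card K) * T^(L*(n-card K)))"
  have "(\<Sum>D\<in>Om n T L. card ({..<T} - UU K D) ^ 2) = (\<Sum>D\<in>Om n T L. \<Sum>s<T. \<Sum>t<T. if UU K D \<inter> {s,t} = {} then 1 else (0::nat))"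
    by (simp add: Z2_as_sum)
  also have "\<dots> = (\<Sum>s<T. \<Sum>D\<in>Om n T L. \<Sum>t<T. if UU K D \<inter> {s,t} = {} then 1 else (0::nat))"
    by (rule sum.swap)
  also have "\<dots> = (\<Sum>s<T. \<Sum>t<T. \<Sum>D\<in>Om n T L. if UU K D \<inter> {s,t} = {} then 1 else (0::nat))"
    by (intro sum.cong refl sum.swap)
  also have "\<dots> = (\<Sum>s<T. \<Sum>t<T. card {D\<in>Om n T L. UU K D \<inter> {s,t} = {}})"
    by (simp add: card_filter_sum finite_Om)
  also have "\<dots> = (\<Sum>s<T. \<Sum>t<T. g (card {s,t}))"
  proof (intro sum.cong refl)
    fix s t assume "s \<in> {..<T}" "t \<in> {..<T}"
    thus "card {D\<in>Om n T L. UU K D \<inter> {s,t} = {}} = g (card {s,t})"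
      using avoid_count[OF assms, of "{s,t}" T L] unfolding g_def by simp
  qed
  also have "\<dots> = (\<Sum>s<T. g 1 + (T - 1) * g 2)"
  proof (intro sum.cong refl)
    fix s assume s: "s \<in> {..<T}"
    have "(\<Sum>t<T. g (card {s,t})) = g (card {s,s}) + (\<Sum>t\<in>{..<T} - {s}. g (card {s,t}))"
      using s by (simp add: sum.remove)
    also have "(\<Sum>t\<in>{..<T} - {s}. g (card {s,t})) = (\<Sum>t\<in>{..<T} - {s}. g 2)"
      by (intro sum.cong refl) (auto simp: numeral_2_eq_2)
    also have "\<dots> = (T - 1) * g 2" using s by simp
    finally show "(\<Sum>t<T. g (card {s,t})) = g 1 + (T - 1) * g 2" by simp
  qed
  finally show ?thesis by (simp add: g_def)
qed

lemma var_bound: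
  fixes a b T R :: real and m :: nat
  assumes "T \<ge> 2" "a = T - 1" "b = T - 2" "R \<ge> 0"
  shows "T * (a^m * R + a * (b^m * R)) * (T^m * R) \<le> (T^m * R)^2 * T + (T * (a^m * R))^2"
proof -
  have a0: "0 \<le> a" "a \<le> T" using assms by auto
  have b0: "0 \<le> b" using assms by auto
  have "a^m \<le> T^m" using a0 by (intro power_mono) auto
  hence "a^m * (T*R*T^m*R) \<le> T^m * (T*R*T^m*R)"
    using assms by (intro mult_right_mono) auto
  hence 1: "T * (a^m * R) * (T^m * R) \<le> (T^m * R)^2 * T"
    by (simp add: power2_eq_square algebra_simps)
  have "b * T \<le> a^2" unfolding assms(2,3) by (simp add: power2_eq_square algebra_simps)
  hence "(b*T)^m \<le> (a^2)^m" using b0 assms by (intro power_mono) auto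
  hence "a * (b*T)^m \<le> T * (a^2)^m" using a0 b0 assms
    by (meson mult_mono zero_le_power zero_le_mult_iff order_trans)
  hence "a * (b*T)^m * (T * R^2) \<le> T * (a^2)^m * (T * R^2)"
    using assms by (intro mult_right_mono) auto
  hence 2: "T * (a * (b^m * R)) * (T^m * R) \<le> (T * (a^m * R))^2"
    by (simp add: power_mult_distrib power2_eq_square power_mult[symmetric] mult.commute mult.left_commute mult.assoc
       flip: power_mult power_add)
  have "T * (a^m * R + a * (b^m * R)) * (T^m * R) = T * (a^m * R) * (T^m * R) + T * (a * (b^m * R)) * (T^m * R)"
    by (simp add: algebra_simps)
  thus ?thesis using 1 2 by linarith
qed

lemma cheb:
  assumes K: "K \<subseteq> {1..n}" and T: "T \<ge> 2" and d: "d > 0"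
  shows "real (card {D \<in> Om n T L. d \<le> \<bar>real (card ({..<T} - UU K D)) - real T * ((real T - 1) / real T)^(L*card K)\<bar>}) * d^2
          \<le> real (card (Om n T L)) * real T"
proof -
  define k where "k = card K"
  have kn: "k \<le> n" unfolding k_def using card_mono[OF _ K] by simp
  define m where "m = L * k"
  define R where "R = real T ^ (L*(n-k))"
  define N where "N = real (card (Om n T L))"
  define Z where "Z = (\<lambda>D. real (card ({..<T} - UU K D)))"
  define \<mu> where "\<mu> = real T * ((real T - 1) / real T)^m"
  define F where "F = {D \<in> Om n T L. d \<le> \<bar>Z D - \<mu>\<bar>}"
  have Tpos: "real T > 0" using T by simp
  have R0: "R > 0" unfolding R_def using Tpos by simp
  have "L * n = m + L*(n-k)" unfolding m_def using kn by (simp add: algebra_simps)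
  hence NN: "N = real T ^ m * R" unfolding N_def R_def by (simp add: card_Om power_add)
  have N0: "N > 0" using NN R0 Tpos by simp
  have T1: "real (T - 1) = real T - 1" "real (T - 2) = real T - 2" "real (T - Suc 0) = real T - 1"
    "real (T - Suc (Suc 0)) = real T - 2" using T by auto
  have S1: "(\<Sum>D\<in>Om n T L. Z D) = real T * ((real T - 1)^m * R)"
  proof -
    have "(\<Sum>D\<in>Om n T L. Z D) = real (\<Sum>D\<in>Om n T L. card ({..<T} - UU K D))" by (simp add: Z_def)
    also have "\<dots> = real (T * ((T-1)^(L*card K) * T^(L*(n-card K))))" by (simp only: Zsum[OF K])
    also have "\<dots> = real T * ((real T - 1)^m * R)" unfolding m_def R_def k_def by (simp add: T1)
    finally show ?thesis .
  qed
  have S2: "(\<Sum>D\<in>Om n T L. (Z D)^2) = real T * ((real T - 1)^m * R + (real T - 1) * ((real T - 2)^m * R))"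
  proof -
    have "(\<Sum>D\<in>Om n T L. (Z D)^2) = real (\<Sum>D\<in>Om n T L. card ({..<T} - UU K D)^2)" by (simp add: Z_def)
    also have "\<dots> = real (T * ((T-1)^(L*card K) * T^(L*(n-card K)) + (T - 1) * ((T-2)^(L*card K) * T^(L*(n-card K)))))"
      by (simp only: Z2sum[OF K])
    also have "\<dots> = real T * ((real T - 1)^m * R + (real T - 1) * ((real T - 2)^m * R))"
      unfolding m_def R_def k_def by (simp add: T1)
    finally show ?thesis .
  qed
  have mu: "\<mu> = (\<Sum>D\<in>Om n T L. Z D) / N"
    unfolding S1 NN \<mu>_def using R0 Tpos by (simp add: power_divide)
  have "(\<Sum>D\<in>Om n T L. (Z D - \<mu>)^2) = (\<Sum>D\<in>Om n T L. (Z D)^2) - 2 * \<mu> * (\<Sum>D\<in>Om n T L. Z D) + N * \<mu>^2"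
    unfolding N_def by (simp add: power2_diff sum.distrib sum_subtractf sum_distrib_left mult_ac)
  also have "\<dots> = (\<Sum>D\<in>Om n T L. (Z D)^2) - (\<Sum>D\<in>Om n T L. Z D)^2 / N"
    unfolding mu using N0 by (simp add: power2_eq_square field_simps)
  also have "\<dots> \<le> N * real T"
  proof -
    have "(\<Sum>D\<in>Om n T L. (Z D)^2) * N \<le> N^2 * real T + (\<Sum>D\<in>Om n T L. Z D)^2"
      unfolding S1 S2 NN using var_bound[of "real T" "real T - 1" "real T - 2" R m] T R0 by simp
    thus ?thesis using N0 by (simp add: field_simps power2_eq_square)
  qed
  finally have V: "(\<Sum>D\<in>Om n T L. (Z D - \<mu>)^2) \<le> N * real T" .
  have "real (card F) * d^2 = (\<Sum>D\<in>F. d^2)" by simp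
  also have "\<dots> \<le> (\<Sum>D\<in>F. (Z D - \<mu>)^2)"
  proof (rule sum_mono)
    fix D assume "D \<in> F"
    hence "d \<le> \<bar>Z D - \<mu>\<bar>" unfolding F_def by auto
    hence "d^2 \<le> \<bar>Z D - \<mu>\<bar>^2" using d by (intro power_mono) auto
    thus "d^2 \<le> (Z D - \<mu>)^2" by simp
  qed
  also have "\<dots> \<le> (\<Sum>D\<in>Om n T L. (Z D - \<mu>)^2)"
    by (rule sum_mono2) (auto simp: F_def finite_Om)
  finally have "real (card F) * d^2 \<le> N * real T" using V by linarith
  thus ?thesis unfolding F_def Z_def \<mu>_def m_def k_def N_def .
qed

lemma finite_UU: "finite K \<Longrightarrow> finite (UU K D)"
  unfolding UU_def by auto

lemma Fi_count:
  assumes K: "K \<subseteq> {1..n}" and i: "i \<in> {1..n}" "i \<notin> K" and u: "u \<ge> 0" and T: "T > 0"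
  shows "real (card {D\<in>Om n T L. set (D i) \<subseteq> UU K D \<and> real (card (UU K D)) \<le> u})
           \<le> real (card (Om n T L)) * (u / real T)^L"
proof -
  have fK: "finite K" using K finite_subset by blast
  define Om' where "Om' = PiE ({1..n}-{i}) (\<lambda>_. Seqs L {..<T})"
  define A' where "A' = {D'\<in>Om'. real (card (UU K D')) \<le> u}"
  define G where "G = {D\<in>Om n T L. set (D i) \<subseteq> UU K D \<and> real (card (UU K D)) \<le> u}"
  have fOm': "finite Om'" unfolding Om'_def by (auto intro!: finite_PiE finite_Seqs)
  have cOm': "card Om' = T^(L*(n-1))"
    unfolding Om'_def using i by (simp add: card_PiE card_Seqs power_mult)
  have UUupd: "UU K (D(i:=xs)) = UU K D" for D xs
    unfolding UU_def using i(2) by (intro SUP_cong refl) auto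
  have "G \<subseteq> (\<lambda>(D',xs). D'(i:=xs)) ` (SIGMA D':A'. Seqs L (UU K D'))"
  proof
    fix D assume D: "D \<in> G"
    hence DO: "D \<in> Om n T L" unfolding G_def by auto
    have "D(i:=undefined) \<in> Om'" unfolding Om'_def
    proof (rule PiE_I)
      fix j assume "j \<in> {1..n} - {i}" thus "(D(i:=undefined)) j \<in> Seqs L {..<T}"
        using DO unfolding Om_def by auto
    next
      fix j assume "j \<notin> {1..n} - {i}" thus "(D(i:=undefined)) j = undefined"
        using DO unfolding Om_def by (cases "j = i") auto
    qed
    moreover have "UU K (D(i:=undefined)) = UU K D" by (rule UUupd)
    moreover have "length (D i) = L" using DO i unfolding Om_def Seqs_def by auto
    ultimately have "(D(i:=undefined), D i) \<in> (SIGMA D':A'. Seqs L (UU K D'))"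
      using D unfolding A'_def G_def Seqs_def by auto
    moreover have "D = (\<lambda>(D',xs). D'(i:=xs)) (D(i:=undefined), D i)" by simp
    ultimately show "D \<in> (\<lambda>(D',xs). D'(i:=xs)) ` (SIGMA D':A'. Seqs L (UU K D'))" by blast
  qed
  have fA': "finite A'" unfolding A'_def using fOm' by simp
  have fS: "finite (SIGMA D':A'. Seqs L (UU K D'))"
    using fA' by (intro finite_SigmaI finite_Seqs finite_UU fK)
  have "card G \<le> card ((\<lambda>(D',xs). D'(i:=xs)) ` (SIGMA D':A'. Seqs L (UU K D')))"
    by (rule card_mono) (use fS \<open>G \<subseteq> _\<close> in auto)
  also have "\<dots> \<le> card (SIGMA D':A'. Seqs L (UU K D'))" by (rule card_image_le[OF fS])
  also have "\<dots> = (\<Sum>D'\<in>A'. card (UU K D') ^ L)"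
    using fA' by (simp add: finite_Seqs finite_UU fK card_Seqs)
  finally have "real (card G) \<le> real (\<Sum>D'\<in>A'. card (UU K D') ^ L)" by linarith
  also have "\<dots> = (\<Sum>D'\<in>A'. real (card (UU K D')) ^ L)" by simp
  also have "\<dots> \<le> (\<Sum>D'\<in>A'. u ^ L)"
    by (rule sum_mono) (auto simp: A'_def intro!: power_mono)
  also have "\<dots> = real (card A') * u^L" by simp
  also have "\<dots> \<le> real (card Om') * u^L"
    using card_mono[OF fOm', of A'] u by (intro mult_right_mono) (auto simp: A'_def)
  also have "\<dots> = real (card (Om n T L)) * (u / real T)^L"
  proof -
    have "L * n = L * (n-1) + L" using i by (cases n) auto
    thus ?thesis using T unfolding cOm' card_Om by (simp add: power_add power_divide)
  qed
  finally show ?thesis unfolding G_def .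
qed

lemma fail_char:
  assumes K: "K \<subseteq> {1..n}" and D: "D \<in> Om n T L" and ne: "comp_decode n T D K \<noteq> K"
  shows "\<exists>i\<in>{1..n} - K. set (D i) \<subseteq> UU K D"
proof -
  have "K \<subseteq> comp_decode n T D K"
    using K unfolding comp_decode_def test_positive_def by auto
  with ne obtain i where i: "i \<in> comp_decode n T D K" "i \<notin> K" by blast
  hence i1: "i \<in> {1..n}" unfolding comp_decode_def by auto
  have sub: "set (D i) \<subseteq> {..<T}" using D i1 unfolding Om_def Seqs_def by auto
  have "set (D i) \<subseteq> UU K D"
  proof
    fix t assume t: "t \<in> set (D i)"
    hence "t < T" using sub by auto
    hence "test_positive D K t" using i t unfolding comp_decode_def by auto
    thus "t \<in> UU K D" unfolding test_positive_def UU_def by auto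
  qed
  thus ?thesis using i i1 by auto
qed

lemma fail_count:
  assumes K: "K \<subseteq> {1..n}" and T: "T \<ge> 2" and \<delta>: "\<delta> > 0" and r: "r \<ge> 0"
    and hr: "1 - r \<le> ((real T - 1)/real T)^(L*card K) - \<delta>"
  shows "real (card {D\<in>Om n T L. comp_decode n T D K \<noteq> K})
          \<le> real (card (Om n T L)) * (1/(\<delta>^2 * real T) + real n * r^L)"
proof -
  define N where "N = real (card (Om n T L))"
  define Z where "Z = (\<lambda>D. real (card ({..<T} - UU K D)))"
  define \<mu> where "\<mu> = real T * ((real T - 1) / real T)^(L*card K)"
  define B where "B = {D \<in> Om n T L. \<delta> * real T \<le> \<bar>Z D - \<mu>\<bar>}"
  define F where "F = (\<lambda>i. {D\<in>Om n T L. set (D i) \<subseteq> UU K D \<and> real (card (UU K D)) \<le> r * real T})"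
  have Tpos: "real T > 0" using T by simp
  have fK: "finite K" using K finite_subset by blast
  have sub: "{D\<in>Om n T L. comp_decode n T D K \<noteq> K} \<subseteq> B \<union> (\<Union>i\<in>{1..n}-K. F i)"
  proof
    fix D assume D: "D \<in> {D\<in>Om n T L. comp_decode n T D K \<noteq> K}"
    hence DO: "D \<in> Om n T L" and ne: "comp_decode n T D K \<noteq> K" by auto
    obtain i where i: "i \<in> {1..n} - K" "set (D i) \<subseteq> UU K D" using fail_char[OF K DO ne] by blast
    show "D \<in> B \<union> (\<Union>i\<in>{1..n}-K. F i)"
    proof (cases "real (card (UU K D)) \<le> r * real T")
      case True thus ?thesis using i DO unfolding F_def by auto
    next
      case False
      have "card ({..<T} - UU K D) = T - card (UU K D)"
        using UU_sub[OF K DO] by (simp add: card_Diff_subset finite_UU fK)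
      moreover have "card (UU K D) \<le> T" using UU_sub[OF K DO] card_mono[of "{..<T}"] by fastforce
      ultimately have "Z D = real T - real (card (UU K D))" unfolding Z_def by simp
      also have "\<dots> < real T * (1 - r)" using False by (simp add: algebra_simps)
      also have "\<dots> \<le> real T * (((real T - 1)/real T)^(L*card K) - \<delta>)"
        using hr Tpos by (intro mult_left_mono) auto
      also have "\<dots> = \<mu> - \<delta> * real T" unfolding \<mu>_def by (simp add: algebra_simps)
      finally have "\<delta> * real T \<le> \<bar>Z D - \<mu>\<bar>" by simp
      thus ?thesis using DO unfolding B_def by auto
    qed
  qed
  have fB: "finite B" unfolding B_def using finite_Om by simp
  have fF: "finite (F i)" for i unfolding F_def using finite_Om by simp
  have "card {D\<in>Om n T L. comp_decode n T D K \<noteq> K} \<le> card (B \<union> (\<Union>i\<in>{1..n}-K. F i))"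
    by (rule card_mono[OF _ sub]) (use fB fF in auto)
  also have "\<dots> \<le> card B + card (\<Union>i\<in>{1..n}-K. F i)" by (rule card_Un_le)
  also have "\<dots> \<le> card B + (\<Sum>i\<in>{1..n}-K. card (F i))"
    by (intro add_left_mono card_UN_le) auto
  finally have c0: "card {D\<in>Om n T L. comp_decode n T D K \<noteq> K} \<le> card B + (\<Sum>i\<in>{1..n}-K. card (F i))" .
  hence "real (card {D\<in>Om n T L. comp_decode n T D K \<noteq> K}) \<le> real (card B + (\<Sum>i\<in>{1..n}-K. card (F i)))"
    by (rule of_nat_mono)
  hence c1: "real (card {D\<in>Om n T L. comp_decode n T D K \<noteq> K}) \<le> real (card B) + (\<Sum>i\<in>{1..n}-K. real (card (F i)))"
    by simp
  have "real (card B) * (\<delta> * real T)^2 \<le> N * real T"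
    using cheb[OF K T, of "\<delta> * real T" L] \<delta> Tpos unfolding B_def N_def Z_def \<mu>_def by simp
  hence cB: "real (card B) \<le> N * (1/(\<delta>^2 * real T))"
    using \<delta> Tpos by (simp add: field_simps power2_eq_square)
  have "(\<Sum>i\<in>{1..n}-K. real (card (F i))) \<le> (\<Sum>i\<in>{1..n}-K. N * r^L)"
  proof (rule sum_mono)
    fix i assume i: "i \<in> {1..n} - K"
    have "real (card (F i)) \<le> N * (r * real T / real T)^L"
      unfolding F_def N_def using i r Tpos by (intro Fi_count[OF K]) auto
    thus "real (card (F i)) \<le> N * r^L" using Tpos by simp
  qed
  also have "\<dots> = real (card ({1..n}-K)) * (N * r^L)" by simp
  also have "\<dots> \<le> real n * (N * r^L)"
  proof -
    have "card ({1..n}-K) \<le> card {1..n}" by (rule card_mono) auto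
    hence "real (card ({1..n}-K)) \<le> real n" by simp
    thus ?thesis using r unfolding N_def by (intro mult_right_mono) auto
  qed
  finally have cF: "(\<Sum>i\<in>{1..n}-K. real (card (F i))) \<le> real n * (N * r^L)" .
  show ?thesis using c1 cB cF unfolding N_def by (simp add: algebra_simps)
qed

lemma pair_pmf_of_set:
  assumes "finite A" "A \<noteq> {}" "finite B" "B \<noteq> {}"
  shows "pair_pmf (pmf_of_set A) (pmf_of_set B) = pmf_of_set (A \<times> B)"
proof (rule pmf_eqI)
  fix x :: "'a \<times> 'b"
  obtain a b where x: "x = (a,b)" by (cases x)
  show "pmf (pair_pmf (pmf_of_set A) (pmf_of_set B)) x = pmf (pmf_of_set (A \<times> B)) x"
    unfolding x using assms by (simp add: pmf_pair card_cartesian_product indicator_def)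
qed

lemma success_bound:
  assumes kn: "k \<le> n" and T: "T \<ge> 2" and \<delta>: "\<delta> > 0" and r: "r \<ge> 0"
    and hr: "1 - r \<le> ((real T - 1)/real T)^(L*k) - \<delta>"
  shows "comp_success_prob n k T L \<ge> 1 - (1/(\<delta>^2 * real T) + real n * r^L)"
proof -
  define KS where "KS = {K. K \<subseteq> {1..n} \<and> card K = k}"
  define bnd where "bnd = 1/(\<delta>^2 * real T) + real n * r^L"
  define N where "N = real (card (Om n T L))"
  have fKS: "finite KS" unfolding KS_def by (rule finite_subset[of _ "Pow {1..n}"]) auto
  have neKS: "KS \<noteq> {}"
  proof -
    obtain K where "K \<subseteq> {1..n}" "card K = k" using obtain_subset_with_card_n[of k "{1..n}"] kn by auto
    thus ?thesis unfolding KS_def by auto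
  qed
  have N0: "N > 0" unfolding N_def card_Om using T by simp
  have neOm: "Om n T L \<noteq> {}" using N0 unfolding N_def by auto
  have des: "nc_design n T L = pmf_of_set (Om n T L)" unfolding nc_design_def Om_def Seqs_def ..
  have P: "pair_pmf (defective_prior n k) (nc_design n T L) = pmf_of_set (KS \<times> Om n T L)"
    unfolding defective_prior_def des KS_def[symmetric]
    by (rule pair_pmf_of_set[OF fKS neKS finite_Om neOm])
  define Fl where "Fl = {(K, D). comp_decode n T D K \<noteq> K}"
  have succ: "{(K, D). comp_decode n T D K = K} = UNIV - Fl" unfolding Fl_def by auto
  have E1: "comp_success_prob n k T L = 1 - measure_pmf.prob (pmf_of_set (KS \<times> Om n T L)) Fl"
    unfolding comp_success_prob_def P succ
    using measure_pmf.prob_compl[of Fl "pmf_of_set (KS \<times> Om n T L)"] by simp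
  have E2: "measure_pmf.prob (pmf_of_set (KS \<times> Om n T L)) Fl = real (card ((KS \<times> Om n T L) \<inter> Fl)) / (real (card KS) * N)"
    using fKS neKS finite_Om neOm unfolding N_def by (simp add: measure_pmf_of_set card_cartesian_product)
  have "(KS \<times> Om n T L) \<inter> Fl = (SIGMA K:KS. {D\<in>Om n T L. comp_decode n T D K \<noteq> K})"
    unfolding Fl_def by auto
  hence "real (card ((KS \<times> Om n T L) \<inter> Fl)) = (\<Sum>K\<in>KS. real (card {D\<in>Om n T L. comp_decode n T D K \<noteq> K}))"
    using fKS finite_Om by simp
  also have "\<dots> \<le> (\<Sum>K\<in>KS. N * bnd)"
  proof (rule sum_mono)
    fix K assume K: "K \<in> KS"
    show "real (card {D\<in>Om n T L. comp_decode n T D K \<noteq> K}) \<le> N * bnd"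
      unfolding N_def bnd_def using K hr unfolding KS_def
      by (intro fail_count[OF _ T \<delta> r]) auto
  qed
  also have "\<dots> = (real (card KS) * N) * bnd" by simp
  finally have X: "real (card ((KS \<times> Om n T L) \<inter> Fl)) \<le> real (card KS) * N * bnd" .
  have "real (card ((KS \<times> Om n T L) \<inter> Fl)) / (real (card KS) * N) \<le> bnd"
  proof -
    have "real (card KS) * N > 0" using fKS neKS N0 by (simp add: card_gt_0_iff)
    thus ?thesis using X by (simp add: divide_le_eq mult.commute)
  qed
  hence "comp_success_prob n k T L \<ge> 1 - bnd" using E1 E2 by simp
  thus ?thesis unfolding bnd_def .
qed

lemma nat_floor_bounds:
  fixes x :: real assumes "x \<ge> 0"
  shows "real (nat \<lfloor>x\<rfloor>) \<le> x" "real (nat \<lfloor>x\<rfloor>) \<ge> x - 1"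
proof -
  have "0 \<le> \<lfloor>x\<rfloor>" using assms by simp
  hence e: "real (nat \<lfloor>x\<rfloor>) = real_of_int \<lfloor>x\<rfloor>" by simp
  show "real (nat \<lfloor>x\<rfloor>) \<le> x" "real (nat \<lfloor>x\<rfloor>) \<ge> x - 1"
    unfolding e using floor_correct[of x] by auto
qed

lemma nat_ceil_bounds:
  fixes x :: real assumes "x \<ge> 0"
  shows "real (nat \<lceil>x\<rceil>) \<ge> x" "real (nat \<lceil>x\<rceil>) \<le> x + 1"
proof -
  have "0 \<le> \<lceil>x\<rceil>" using assms by simp
  hence e: "real (nat \<lceil>x\<rceil>) = real_of_int \<lceil>x\<rceil>" by simp
  show "real (nat \<lceil>x\<rceil>) \<ge> x" "real (nat \<lceil>x\<rceil>) \<le> x + 1"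
    unfolding e using ceiling_correct[of x] by auto
qed

lemma p1_bound:
  fixes T k L :: nat and y z :: real
  assumes T: "T \<ge> 2" and k: "k \<ge> 1" and L: "real L \<le> real T * ln 2 / real k + 1"
    and y: "real k / real T \<le> y" and z: "1 / real T \<le> z"
  shows "exp (-((ln 2 + y) * (1 + 2*z))) \<le> ((real T - 1)/real T)^(L*k)"
proof -
  define x where "x = 1 / real T"
  have Tp: "real T \<ge> 2" using T by simp
  have x0: "0 \<le> x" "x \<le> 1/2" unfolding x_def using Tp by (auto simp: field_simps)
  have q: "(real T - 1)/real T = 1 - x" unfolding x_def using Tp by (simp add: field_simps)
  have pos: "1 - x > 0" using x0 by simp
  have "(1 - x)^(L*k) = exp (real (L*k) * ln (1 - x))"
  proof -
    have "(1 - x)^(L*k) = exp (ln ((1 - x)^(L*k)))" using pos by simp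
    also have "ln ((1 - x)^(L*k)) = real (L*k) * ln (1 - x)" by (rule ln_realpow)
    finally show ?thesis .
  qed
  also have "real (L*k) * ln (1 - x) \<ge> real (L*k) * (- x - 2 * x^2)"
    using ln_one_minus_pos_lower_bound[OF x0] by (intro mult_left_mono) auto
  hence "exp (real (L*k) * (- x - 2 * x^2)) \<le> exp (real (L*k) * ln (1 - x))" by simp
  moreover have "-((ln 2 + y) * (1 + 2*z)) \<le> real (L*k) * (- x - 2 * x^2)"
  proof -
    have "real (L*k) * x = real L * real k / real T" unfolding x_def by simp
    also have "\<dots> \<le> (real T * ln 2 / real k + 1) * real k / real T"
      using L Tp by (intro divide_right_mono mult_right_mono) auto
    also have "\<dots> = ln 2 + real k / real T" using Tp k by (simp add: field_simps)
    also have "\<dots> \<le> ln 2 + y" using y by simp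
    finally have A: "real (L*k) * x \<le> ln 2 + y" .
    have "1 + 2 * x \<le> 1 + 2 * z" using z unfolding x_def by simp
    have "real (L*k) * x * (1 + 2*x) \<le> (ln 2 + y) * (1 + 2*z)"
    proof -
      have "0 \<le> real (L*k) * x" using x0 by simp
      hence "0 \<le> ln 2 + y" using A by linarith
      thus ?thesis using A \<open>1 + 2 * x \<le> 1 + 2 * z\<close> x0 by (intro mult_mono) auto
    qed
    thus ?thesis by (simp add: algebra_simps power2_eq_square)
  qed
  hence "exp (-((ln 2 + y) * (1 + 2*z))) \<le> exp (real (L*k) * (- x - 2 * x^2))" by simp
  ultimately show ?thesis unfolding q by linarith
qed

lemma aux_ineq: "(e::real) \<le> P \<Longrightarrow> 1/2 - (r - 1/2)/2 < e \<Longrightarrow> 1 - r \<le> P - (r - 1/2)/2"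
  by argo

lemma rpow_bound:
  fixes r a e :: real and n L :: nat
  assumes r: "r = exp (-(1 + e/4) / a)" and a: "a > 0" and n: "n \<ge> 2"
    and L: "real L \<ge> a * ln (real n)" and e: "e > 0"
  shows "real n * r^L \<le> real n powr (-e/4)"
proof -
  have m: "-(1 + e/4) / a = - ((1 + e/4) / a)" by (simp add: field_simps)
  have "0 \<le> (1 + e/4) / a" using a e by simp
  hence r0: "r > 0" "r \<le> 1" unfolding r m by auto
  have ln0: "ln (real n) > 0" using n by simp
  have "r^L = r powr (real L)" using r0 by (simp add: powr_realpow)
  also have "\<dots> \<le> r powr (a * ln (real n))" using r0 L by (intro powr_mono') auto
  also have "\<dots> = exp (a * ln (real n) * ln r)" using r0 by (simp add: powr_def)
  also have "a * ln (real n) * ln r = (-(1 + e/4)) * ln (real n)" using r a by simp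
  also have "exp \<dots> = real n powr (-(1 + e/4))" using n by (simp add: powr_def)
  finally have "real n * r^L \<le> real n * real n powr (-(1 + e/4))" using n by (intro mult_left_mono) auto
  also have "\<dots> = real n powr (-e/4)" using n by (simp add: powr_mult_base)
  finally show ?thesis .
qed

theorem theorem2:
  fixes lam eps :: real
  assumes "lam > 0" and "eps > 0"
  shows "(\<lambda>n. comp_success_prob n (num_def lam n) (num_tests lam eps n)
              (tests_per_item lam eps n)) \<longlonglongrightarrow> 1"
proof -
  have lam: "lam > 0" and eps: "eps > 0" using assms by auto
  define c where "c = (1+eps)*lam/(ln 2)^2"
  define a where "a = (1+eps/2)/ln 2"
  define r where "r = exp (-(1+eps/4)/a)"
  define \<delta> where "\<delta> = (r - 1/2)/2"
  define g where "g = (\<lambda>n::nat. 1/(\<delta>^2 * (c*real n - 1)) + real n powr (-eps/4))"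
  define qb where "qb = (\<lambda>n::nat. (ln 2 + (lam*real n/ln(real n))/(c*real n - 1)) * (1 + 2/(c*real n - 1)))"
  define \<rho> where "\<rho> = (\<lambda>n::nat. (c*real n - 1)*ln 2/(lam*real n))"
  have ln2: "ln (2::real) > 0" by simp
  have c0: "c > 0" unfolding c_def using lam eps by simp
  have a0: "a > 0" unfolding a_def using eps by simp
  have "(1+eps/4)/a < ln 2"
    unfolding a_def using eps ln2 by (simp add: field_simps)
  moreover have "-(1+eps/4)/a = - ((1+eps/4)/a)" by (simp add: field_simps)
  ultimately have "exp (- ln 2) < r" unfolding r_def by simp
  moreover have "exp (- ln (2::real)) = 1/2" by (simp add: exp_minus)
  ultimately have rh: "r > 1/2" by simp
  have \<delta>0: "\<delta> > 0" unfolding \<delta>_def using rh by simp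
  have lim_g: "g \<longlonglongrightarrow> 0"
  proof -
    have 1: "(\<lambda>n. 1 / (\<delta>^2 * (c * real n - 1))) \<longlonglongrightarrow> 0" using \<delta>0 c0 by real_asymp
    have 2: "(\<lambda>n. real n powr (-eps/4)) \<longlonglongrightarrow> 0" using eps by real_asymp
    show ?thesis unfolding g_def using tendsto_add[OF 1 2] by simp
  qed
  have lim_qb: "qb \<longlonglongrightarrow> ln 2" unfolding qb_def using lam c0 by real_asymp
  have "(\<lambda>n. exp (- qb n)) \<longlonglongrightarrow> exp (- ln 2)" by (intro tendsto_intros lim_qb)
  hence "(\<lambda>n. exp (- qb n)) \<longlonglongrightarrow> 1/2" using \<open>exp (- ln (2::real)) = 1/2\<close> by simp
  hence ev_q: "eventually (\<lambda>n. exp (- qb n) > 1/2 - \<delta>) sequentially"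
    using \<delta>0 by (intro order_tendstoD(1)) auto
  have "(\<lambda>n. c * ln 2 / lam - ln 2 / (lam * real n)) \<longlonglongrightarrow> c * ln 2 / lam - 0"
    by (intro tendsto_intros) (use lam in real_asymp)
  moreover have "eventually (\<lambda>n. c * ln 2 / lam - ln 2 / (lam * real n) = \<rho> n) sequentially"
    using eventually_gt_at_top[of "0::nat"] 
    by eventually_elim (use lam in \<open>simp add: \<rho>_def field_simps\<close>)
  ultimately have "\<rho> \<longlonglongrightarrow> c * ln 2 / lam" by (simp add: tendsto_cong)
  moreover have "c * ln 2 / lam > a"
    unfolding c_def a_def using lam eps ln2 by (simp add: field_simps power2_eq_square)
  ultimately have ev_\<rho>: "eventually (\<lambda>n. \<rho> n > a) sequentially" by (rule order_tendstoD(1))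
  have ev1: "eventually (\<lambda>n. 2 \<le> c * real n - 1) sequentially" using c0 by real_asymp
  have ev2: "eventually (\<lambda>n. 2 \<le> lam * real n / ln (real n)) sequentially" using lam by real_asymp
  have ev3: "eventually (\<lambda>n. lam * real n / ln (real n) \<le> real n) sequentially" using lam by real_asymp
  have ev4: "eventually (\<lambda>n. n \<ge> (2::nat)) sequentially" by (rule eventually_ge_at_top)
  have main: "eventually (\<lambda>n. 1 - g n \<le> comp_success_prob n (num_def lam n) (num_tests lam eps n)
              (tests_per_item lam eps n)) sequentially"
    using ev_q ev_\<rho> ev1 ev2 ev3 ev4
  proof eventually_elim
    case (elim n)
    define T where "T = num_tests lam eps n"
    define k where "k = num_def lam n"
    define L where "L = tests_per_item lam eps n"
    have n2: "n \<ge> 2" using elim by simp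
    have lnn: "ln (real n) > 0" using n2 by simp
    have cn: "(1 + eps) * lam / (ln 2)\<^sup>2 * real n = c * real n" unfolding c_def ..
    have cn0: "c * real n \<ge> 0" using c0 by simp
    have hT1: "real T \<le> c * real n" and hT2: "real T \<ge> c * real n - 1"
      unfolding T_def num_tests_def cn using nat_floor_bounds[OF cn0] by auto
    have kn0: "lam * real n / ln (real n) \<ge> 0" using lam lnn by simp
    have hk1: "real k \<le> lam * real n / ln (real n)" and hk2: "real k \<ge> lam * real n / ln (real n) - 1"
      unfolding k_def num_def_def using nat_floor_bounds[OF kn0] by auto
    have T2: "T \<ge> 2" using hT2 elim by linarith
    have k1: "k \<ge> 1" using hk2 elim by linarith
    have kn: "k \<le> n" using hk1 elim by linarith
    have Tpos: "real T > 0" using T2 by simp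
    have kpos: "real k > 0" using k1 by simp
    have x0: "real T * ln 2 / real k \<ge> 0" using Tpos kpos by simp
    have hL1: "real L \<ge> real T * ln 2 / real k" and hL2: "real L \<le> real T * ln 2 / real k + 1"
      unfolding L_def tests_per_item_def T_def[symmetric] k_def[symmetric] using nat_ceil_bounds[OF x0] by auto
    have y: "real k / real T \<le> (lam*real n/ln(real n))/(c*real n - 1)"
      using hk1 hT2 elim kpos by (intro frac_le) auto
    have z: "1 / real T \<le> 1/(c*real n - 1)"
      using hT2 elim by (intro divide_left_mono) auto
    have p1: "exp (- qb n) \<le> ((real T - 1)/real T)^(L*k)"
      unfolding qb_def using p1_bound[OF T2 k1 hL2 y z] by simp
    have hr: "1 - r \<le> ((real T - 1)/real T)^(L*k) - \<delta>"
      unfolding \<delta>_def by (rule aux_ineq[OF p1]) (use elim in \<open>simp add: \<delta>_def\<close>)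
    have sb: "comp_success_prob n k T L \<ge> 1 - (1/(\<delta>^2 * real T) + real n * r^L)"
      using success_bound[OF kn T2 \<delta>0 _ hr] rh by simp
    have b1: "1/(\<delta>^2 * real T) \<le> 1/(\<delta>^2 * (c*real n - 1))"
      using hT2 elim \<delta>0 by (intro divide_left_mono mult_left_mono mult_pos_pos) auto
    have "real L \<ge> a * ln (real n)"
    proof -
      have "real T * ln 2 / real k \<ge> (c * real n - 1) * ln 2 / (lam * real n / ln (real n))"
        using hT2 hk1 kpos elim ln2 by (intro frac_le mult_right_mono) auto
      also have "(c * real n - 1) * ln 2 / (lam * real n / ln (real n)) = \<rho> n * ln (real n)"
        unfolding \<rho>_def using lnn n2 lam by (simp add: field_simps)
      also have "\<rho> n * ln (real n) \<ge> a * ln (real n)" using elim lnn by (intro mult_right_mono) auto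
      finally show ?thesis using hL1 by linarith
    qed
    hence b2: "real n * r^L \<le> real n powr (-eps/4)" by (intro rpow_bound[OF r_def a0 n2 _ eps])
    show ?case using sb b1 b2 unfolding g_def T_def k_def L_def by linarith
  qed
  have up: "eventually (\<lambda>n. comp_success_prob n (num_def lam n) (num_tests lam eps n)
              (tests_per_item lam eps n) \<le> 1) sequentially"
    unfolding comp_success_prob_def by (simp add: measure_pmf.prob_le_1)
  have "(\<lambda>n. 1 - g n) \<longlonglongrightarrow> 1 - 0" by (intro tendsto_intros lim_g)
  hence l1: "(\<lambda>n. 1 - g n) \<longlonglongrightarrow> 1" by simp
  show ?thesis by (rule tendsto_sandwich[OF main up l1 tendsto_const])
qed

end
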